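(* Let $H=B(1,3,3)$ and $G=H^2$. Then $G$ is equitably $4$-choosable.
   Context: For $m,l_1,\ldots,l_m\in\mathbb{N}$ with $l_1\le\cdots\le l_m$, $B(l_1,\ldots,l_m)$ is the graph with vertex set $\{u\}\cup\{v_{i,j}: i\in[m], j\in[l_i]\}$ in which, for each $i\in[m]$, consecutive vertices in the sequence $u, v_{i,1},\ldots,v_{i,l_i}$ are adjacent (and there are no other edges). For a graph $H$, $H^2$ has vertex set $V(H)$ with two vertices adjacent iff their distance in $H$ is 1 or 2. A $k$-assignment $L$ assigns to each vertex a set of exactly $k$ colors; an equitable $L$-coloring of $G$ is a proper coloring $f$ with $f(v)\in L(v)$ such that no color is used more than $\lceil |V(G)|/k\rceil$ times; $G$ is equitably $k$-choosable if it has an equitable $L$-coloring for every $k$-assignment $L$. *)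

theory Defs
  imports Main
begin

text \<open>The spider B(l_1,...,l_m), given by the list ls = [l_1,...,l_m]:
  the centre u is the pair (0,0), and v_{i,j} is the pair (i,j)
  for 1 <= i <= m and 1 <= j <= l_i.\<close>

definition B_verts :: "nat list \<Rightarrow> (nat \<times> nat) set" where
  "B_verts ls = {(0,0)} \<union>
     {(i,j). 1 \<le> i \<and> i \<le> length ls \<and> 1 \<le> j \<and> j \<le> ls ! (i - 1)}"

definition B_adj :: "nat list \<Rightarrow> (nat \<times> nat) \<Rightarrow> (nat \<times> nat) \<Rightarrow> bool" where
  "B_adj ls x y \<longleftrightarrow> x \<in> B_verts ls \<and> y \<in> B_verts ls \<and>
     ((x = (0,0) \<and> 1 \<le> fst y \<and> snd y = 1) \<or>
      (y = (0,0) \<and> 1 \<le> fst x \<and> snd x = 1) \<or>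
      (1 \<le> fst x \<and> fst x = fst y \<and> (snd y = snd x + 1 \<or> snd x = snd y + 1)))"

definition square_adj :: "'a set \<Rightarrow> ('a \<Rightarrow> 'a \<Rightarrow> bool) \<Rightarrow> 'a \<Rightarrow> 'a \<Rightarrow> bool" where
  "square_adj V E x y \<longleftrightarrow> x \<in> V \<and> y \<in> V \<and> x \<noteq> y \<and>
     (E x y \<or> (\<exists>z\<in>V. E x z \<and> E z y))"

definition k_assignment :: "'a set \<Rightarrow> ('a \<Rightarrow> 'c set) \<Rightarrow> nat \<Rightarrow> bool" where
  "k_assignment V L k \<longleftrightarrow> (\<forall>v\<in>V. finite (L v) \<and> card (L v) = k)"

definition equitable_L_coloring ::
  "'a set \<Rightarrow> ('a \<Rightarrow> 'a \<Rightarrow> bool) \<Rightarrow> ('a \<Rightarrow> 'c set) \<Rightarrow> nat \<Rightarrow> ('a \<Rightarrow> 'c) \<Rightarrow> bool" where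
  "equitable_L_coloring V E L k f \<longleftrightarrow>
     (\<forall>v\<in>V. f v \<in> L v) \<and>
     (\<forall>x\<in>V. \<forall>y\<in>V. E x y \<longrightarrow> f x \<noteq> f y) \<and>
     (\<forall>c. card {v \<in> V. f v = c} \<le> (card V + k - 1) div k)"

end

theory Submission imports Defs begin
lemma Bv: "B_verts [1,3,3] = {(0,0),(1,1),(2,1),(2,2),(2,3),(3,1),(3,2),(3,3)}"
proof -
  have "{(i,j). 1 \<le> i \<and> i \<le> length [1::nat,3,3] \<and> 1 \<le> j \<and> j \<le> [1::nat,3,3] ! (i - 1)}
      = {(1,1),(2,1),(2,2),(2,3),(3,1),(3,2),(3,3)}" (is "?A = ?B")
  proof
    show "?A \<subseteq> ?B"
    proof
      fix p assume "p \<in> ?A"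
      then obtain i j where p: "p = (i,j)" and h: "1 \<le> i" "i \<le> 3" "1 \<le> j" "j \<le> [1::nat,3,3] ! (i - 1)" by auto
      have "i = 1 \<or> i = 2 \<or> i = 3" using h by auto
      moreover have "j = 1 \<or> j = 2 \<or> j = 3" using h calculation by auto
      ultimately show "p \<in> ?B" using h p by auto
    qed
  qed auto
  then show ?thesis unfolding B_verts_def by auto
qed
definition "Ed = {((0::nat,0::nat),(1::nat,1::nat)),((0,0),(2,1)),((0,0),(3,1)),((2,1),(2,2)),((2,2),(2,3)),((3,1),(3,2)),((3,2),(3,3))}"
lemma adj: assumes "B_adj [1,3,3] x y" shows "(x,y) \<in> Ed \<or> (y,x) \<in> Ed"
proof -
  have "x \<in> B_verts [1,3,3]" "y \<in> B_verts [1,3,3]" using assms unfolding B_adj_def by auto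
  then show ?thesis using assms unfolding B_adj_def Bv Ed_def
    apply simp
    apply (elim disjE) by simp_all
qed
lemma pick: assumes "finite A" "card A = 4" shows "\<exists>x\<in>A. x \<noteq> p \<and> x \<noteq> q \<and> x \<noteq> r"
proof -
  have "card (A - {p,q,r}) \<ge> card A - card {p,q,r}" by (rule diff_card_le_card_Diff) simp
  moreover have "card {p,q,r} \<le> 3" by (simp add: card_insert_if)
  ultimately have "card (A - {p,q,r}) > 0" using assms by linarith
  then have "A - {p,q,r} \<noteq> {}" by (metis card.empty less_irrefl)
  then show ?thesis by blast
qed

lemma three: assumes "finite S" "\<not> card S \<le> 2"
  shows "\<exists>a b c. a \<in> S \<and> b \<in> S \<and> c \<in> S \<and> a \<noteq> b \<and> a \<noteq> c \<and> b \<noteq> c"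
proof -
  obtain a where a: "a \<in> S" using assms by (metis card.empty ex_in_conv zero_le)
  have "card (S - {a}) > 1" using assms a by auto
  then obtain b where b: "b \<in> S - {a}" by (metis card.empty ex_in_conv not_less_zero)
  have "card (S - {a} - {b}) > 0" using assms a b by auto
  then obtain c where c: "c \<in> S - {a} - {b}" by (metis card.empty ex_in_conv less_irrefl)
  show ?thesis using a b c by blast
qed
theorem lemma2p7:
  fixes L :: "nat \<times> nat \<Rightarrow> 'c set"
  assumes "k_assignment (B_verts [1,3,3]) L 4"
  shows "\<exists>f. equitable_L_coloring (B_verts [1,3,3])
              (square_adj (B_verts [1,3,3]) (B_adj [1,3,3])) L 4 f"
proof -
  let ?V = "B_verts [1,3,3]"
  have LL: "\<And>v. v \<in> ?V \<Longrightarrow> finite (L v) \<and> card (L v) = 4" using assms unfolding k_assignment_def by auto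
  have P: "\<And>v p q r. v \<in> ?V \<Longrightarrow> \<exists>x\<in>L v. x \<noteq> p \<and> x \<noteq> q \<and> x \<noteq> r"
  proof -
    fix v p q r assume "v \<in> ?V"
    then have "finite (L v)" "card (L v) = 4" using LL by auto
    then show "\<exists>x\<in>L v. x \<noteq> p \<and> x \<noteq> q \<and> x \<noteq> r" by (rule pick)
  qed
  have PA: "\<And>v. v \<in> ?V \<Longrightarrow> \<exists>x. x \<in> L v" using P by blast
  obtain c where c: "c \<in> L (1,1)" using PA[of "(1,1)"] unfolding Bv by auto
  obtain cu where cu: "cu \<in> L (0,0)" "cu \<noteq> c" using P[of "(0,0)" c c c] unfolding Bv by auto
  obtain cx1 where cx1: "cx1 \<in> L (2,1)" "cx1 \<noteq> c" "cx1 \<noteq> cu" using P[of "(2,1)" c cu cu] unfolding Bv by auto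
  obtain cy1 where cy1: "cy1 \<in> L (3,1)" "cy1 \<noteq> c" "cy1 \<noteq> cu" "cy1 \<noteq> cx1" using P[of "(3,1)" c cu cx1] unfolding Bv by auto
  obtain cy2 where cy2: "cy2 \<in> L (3,2)" "cy2 \<noteq> c" "cy2 \<noteq> cu" "cy2 \<noteq> cy1" using P[of "(3,2)" c cu cy1] unfolding Bv by auto
  obtain cy3 where cy3: "cy3 \<in> L (3,3)" "cy3 \<noteq> c" "cy3 \<noteq> cy1" "cy3 \<noteq> cy2" using P[of "(3,3)" c cy1 cy2] unfolding Bv by auto
  obtain cx2 where cx2: "cx2 \<in> L (2,2)" "cx2 \<noteq> cu" "cx2 \<noteq> cx1" using P[of "(2,2)" cu cx1 cx1] unfolding Bv by auto
  obtain cx3 where cx3: "cx3 \<in> L (2,3)" "cx3 \<noteq> cu" "cx3 \<noteq> cx1" "cx3 \<noteq> cx2" using P[of "(2,3)" cu cx1 cx2] unfolding Bv by auto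
  define f where "f = (\<lambda>v::nat\<times>nat. if v = (0,0) then cu else if v = (1,1) then c else if v = (2,1) then cx1
     else if v = (2,2) then cx2 else if v = (2,3) then cx3 else if v = (3,1) then cy1 else if v = (3,2) then cy2 else cy3)"
  have fv: "f (0,0) = cu" "f (1,1) = c" "f (2,1) = cx1" "f (2,2) = cx2" "f (2,3) = cx3"
     "f (3,1) = cy1" "f (3,2) = cy2" "f (3,3) = cy3" unfolding f_def by simp_all
  note ne = cu(2) cx1(2-3) cy1(2-4) cy2(2-4) cy3(2-4) cx2(2-3) cx3(2-4)
  have E1: "\<And>x z. (x,z) \<in> Ed \<or> (z,x) \<in> Ed \<Longrightarrow> f x \<noteq> f z"
    unfolding Ed_def apply simp apply (elim disjE conjE) using ne by (simp_all add: fv fv[simplified])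
  have E2: "\<And>x z y. (x,z) \<in> Ed \<or> (z,x) \<in> Ed \<Longrightarrow> (z,y) \<in> Ed \<or> (y,z) \<in> Ed \<Longrightarrow> x \<noteq> y \<Longrightarrow> f x \<noteq> f y"
    unfolding Ed_def apply simp apply (elim disjE conjE) using ne by (simp_all add: fv fv[simplified])
  have proper: "\<forall>x\<in>?V. \<forall>y\<in>?V. square_adj ?V (B_adj [1,3,3]) x y \<longrightarrow> f x \<noteq> f y"
  proof (intro ballI impI)
    fix x y assume "square_adj ?V (B_adj [1,3,3]) x y"
    then have "x \<noteq> y" "B_adj [1,3,3] x y \<or> (\<exists>z. B_adj [1,3,3] x z \<and> B_adj [1,3,3] z y)"
      unfolding square_adj_def by auto
    then show "f x \<noteq> f y" using adj E1 E2 by blast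
  qed
  have lists: "\<forall>v\<in>?V. f v \<in> L v"
    unfolding Bv using fv c cu(1) cx1(1) cy1(1) cy2(1) cy3(1) cx2(1) cx3(1) by auto
  have cardV: "card ?V = 8" unfolding Bv by simp
  have count: "card {v \<in> ?V. f v = d} \<le> 2" for d
  proof (rule ccontr)
    assume nc: "\<not> card {v \<in> ?V. f v = d} \<le> 2"
    then obtain p q r where h: "p \<in> ?V" "q \<in> ?V" "r \<in> ?V" "f p = d" "f q = d" "f r = d"
        "p \<noteq> q" "p \<noteq> r" "q \<noteq> r"
    proof -
      have "finite {v \<in> ?V. f v = d}" unfolding Bv by simp
      from three[OF this nc] show ?thesis using that by blast
    qed
    from h(1-3) show False unfolding Bv
      apply simp
      apply (elim disjE)
      using h(4-9) ne by (simp_all add: fv fv[simplified])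
  qed
  show ?thesis
    unfolding equitable_L_coloring_def
    using lists proper count cardV by (intro exI[of _ f]) auto
qed

end
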